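(* Let $X$ be a compact topological space, let $D\subseteq X$, let $\overline{D}$ be the closure of $D$ in $X$, and put $\partial D:=\overline{D}\setminus D$. Let $\overline{\mathbb{C}}=\mathbb{C}\cup\{\infty\}$ be the Riemann sphere and let $f\colon\overline{D}\to\overline{\mathbb{C}}$ be a continuous map such that $f(D)$ is open in $\overline{\mathbb{C}}$. Let $m:=\inf_{z\in\partial D}|f(z)|\in[0,\infty]$ (with $|\infty|=\infty$) and $B_m:=\{w\in\mathbb{C}\colon |w|<m\}$. Then either $f(D)\supseteq B_m$ (i.e. $f$ takes on $D$ all values of modulus $<m$), or $f(\overline{D})\subseteq\overline{\mathbb{C}}\setminus B_m$ (i.e. all values of $f$ on $\overline{D}$ have modulus $\ge m$).
   Context: Note that $\partial D$ is defined as $\overline{D}\setminus D$; the convention $|\infty|=\infty$ is used. *)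

theory Defs
  imports "HOL-Analysis.Analysis" "HOL-Library.Extended_Real"
begin

text \<open>The Riemann sphere is modelled as \<open>complex option\<close>: \<open>Some z\<close> is the finite
  point z and \<open>None\<close> is the point at infinity.  Its topology is that of the
  one-point compactification of the complex plane.\<close>

definition sphere_open :: "complex option set \<Rightarrow> bool" where
  "sphere_open U \<longleftrightarrow> open {z. Some z \<in> U} \<and>
     (None \<in> U \<longrightarrow> (\<exists>R::real. \<forall>z. R < cmod z \<longrightarrow> Some z \<in> U))"

lemma istopology_sphere_open: "istopology sphere_open"
  unfolding istopology_def
proof (intro conjI allI impI)
  fix S T assume S: "sphere_open S" and T: "sphere_open T"
  have "{z. Some z \<in> S \<inter> T} = {z. Some z \<in> S} \<inter> {z. Some z \<in> T}" by auto
  moreover have "None \<in> S \<inter> T \<Longrightarrow> \<exists>R::real. \<forall>z. R < cmod z \<longrightarrow> Some z \<in> S \<inter> T"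
  proof -
    assume "None \<in> S \<inter> T"
    then obtain R1 R2 where "\<forall>z. R1 < cmod z \<longrightarrow> Some z \<in> S" "\<forall>z. R2 < cmod z \<longrightarrow> Some z \<in> T"
      using S T unfolding sphere_open_def by blast
    then show ?thesis by (intro exI[of _ "max R1 R2"]) auto
  qed
  ultimately show "sphere_open (S \<inter> T)" using S T unfolding sphere_open_def by auto
next
  fix K assume K: "\<forall>S\<in>K. sphere_open S"
  have "{z. Some z \<in> \<Union>K} = (\<Union>S\<in>K. {z. Some z \<in> S})" by auto
  moreover have "None \<in> \<Union>K \<Longrightarrow> \<exists>R::real. \<forall>z. R < cmod z \<longrightarrow> Some z \<in> \<Union>K"
    using K unfolding sphere_open_def by blast
  ultimately show "sphere_open (\<Union>K)" using K unfolding sphere_open_def by auto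
qed

definition riemann_sphere :: "complex option topology" where
  "riemann_sphere = topology sphere_open"

definition sphere_abs :: "complex option \<Rightarrow> ereal" where
  "sphere_abs w = (case w of None \<Rightarrow> \<infinity> | Some z \<Rightarrow> ereal (cmod z))"

end

theory Submission
  imports Defs
begin

lemma openin_rs: "openin riemann_sphere = sphere_open"
  by (simp add: riemann_sphere_def istopology_sphere_open)

lemma topspace_rs: "topspace riemann_sphere = UNIV"
proof -
  have "sphere_open UNIV" unfolding sphere_open_def by simp
  thus ?thesis unfolding topspace_def openin_rs by auto
qed

lemma g_cont:
  fixes w :: complex
  shows "continuous_map riemann_sphere euclideanreal
           (\<lambda>p. case p of None \<Rightarrow> 1 | Some z \<Rightarrow> min 1 (dist z w))"
  unfolding continuous_map topspace_rs openin_rs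
proof (intro conjI allI impI)
  fix U :: "real set" assume "openin euclideanreal U"
  hence oU: "open U" by simp
  have "{z. Some z \<in> {x \<in> UNIV. (case x of None \<Rightarrow> 1 | Some z \<Rightarrow> min 1 (dist z w)) \<in> U}}
        = (\<lambda>z. min 1 (dist z w)) -` U" by auto
  moreover have "open ((\<lambda>z. min 1 (dist z w)) -` U)"
    by (intro open_vimage oU continuous_intros)
  moreover have "\<exists>R::real. \<forall>z. R < cmod z \<longrightarrow> Some z \<in> {x \<in> UNIV. (case x of None \<Rightarrow> 1 | Some z \<Rightarrow> min 1 (dist z w)) \<in> U}"
    if "None \<in> {x \<in> UNIV. (case x of None \<Rightarrow> (1::real) | Some z \<Rightarrow> min 1 (dist z w)) \<in> U}"
  proof -
    from that have "1 \<in> U" by simp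
    show ?thesis
    proof (intro exI[of _ "cmod w + 1"] allI impI)
      fix z :: complex assume "cmod w + 1 < cmod z"
      hence "dist z w \<ge> 1" using norm_triangle_ineq2[of z w] by (simp add: dist_norm)
      thus "Some z \<in> {x \<in> UNIV. (case x of None \<Rightarrow> 1 | Some z \<Rightarrow> min 1 (dist z w)) \<in> U}"
        using \<open>1 \<in> U\<close> by (simp add: min_def)
    qed
  qed
  ultimately show "sphere_open {x \<in> UNIV. (case x of None \<Rightarrow> 1 | Some z \<Rightarrow> min 1 (dist z w)) \<in> U}"
    unfolding sphere_open_def by simp
qed auto

lemma Bm_props:
  fixes m :: ereal
  shows "open {w::complex. ereal (cmod w) < m} \<and> connected {w::complex. ereal (cmod w) < m}"
proof (cases m)
  case (real r)
  hence "{w::complex. ereal (cmod w) < m} = ball 0 r" by auto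
  thus ?thesis by simp
next
  case PInf
  hence "{w::complex. ereal (cmod w) < m} = UNIV" by auto
  thus ?thesis by (simp add: connected_UNIV)
next
  case MInf
  hence "{w::complex. ereal (cmod w) < m} = {}" by auto
  thus ?thesis by simp
qed

theorem mainTheorem8:
  fixes X :: "'a topology" and D :: "'a set" and f :: "'a \<Rightarrow> complex option"
  assumes "compact_space X"
    and "D \<subseteq> topspace X"
    and "continuous_map (subtopology X (X closure_of D)) riemann_sphere f"
    and "openin riemann_sphere (f ` D)"
  shows "let m = (INF z \<in> (X closure_of D) - D. sphere_abs (f z));
             Bm = {w::complex. ereal (cmod w) < m}
         in Some ` Bm \<subseteq> f ` D \<or> f ` (X closure_of D) \<subseteq> UNIV - Some ` Bm"
proof -
  define C where "C = X closure_of D"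
  define m where "m = (INF z \<in> C - D. sphere_abs (f z))"
  define Bm where "Bm = {w::complex. ereal (cmod w) < m}"
  define U where "U = {z \<in> Bm. Some z \<in> f ` D}"
  have DC: "D \<subseteq> C" unfolding C_def using assms(2) closure_of_subset by blast
  have bd: "Some z \<notin> f ` (C - D)" if "z \<in> Bm" for z
  proof
    assume "Some z \<in> f ` (C - D)"
    then obtain c where c: "c \<in> C - D" "f c = Some z" by auto
    have "m \<le> sphere_abs (f c)" unfolding m_def by (rule INF_lower[OF c(1)])
    thus False using that c(2) unfolding Bm_def sphere_abs_def by simp
  qed
  have oB: "open Bm" and cB: "connected Bm" using Bm_props unfolding Bm_def by auto
  have oD: "open {z. Some z \<in> f ` D}" using assms(4) unfolding openin_rs sphere_open_def by simp
  have oU: "open U"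
  proof -
    have "U = Bm \<inter> {z. Some z \<in> f ` D}" unfolding U_def by auto
    thus ?thesis using oB oD by auto
  qed
  have cpt: "compact_space (subtopology X C)"
    by (rule compact_space_subtopology, rule closedin_compact_space[OF assms(1)])
       (simp add: C_def)
  have tsC: "topspace (subtopology X C) = C"
    unfolding C_def using closure_of_subset_topspace[of X D] by auto
  have oBU: "open (Bm - U)"
    unfolding open_contains_ball
  proof
    fix w assume w: "w \<in> Bm - U"
    have nw: "Some w \<notin> f ` C"
    proof
      assume "Some w \<in> f ` C"
      moreover have "Some w \<notin> f ` D" using w unfolding U_def by auto
      ultimately have "Some w \<in> f ` (C - D)" by auto
      thus False using bd w by auto
    qed
    define g where "g = (\<lambda>p. case p of None \<Rightarrow> 1 | Some z \<Rightarrow> min 1 (dist z w))"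
    have "continuous_map (subtopology X C) euclideanreal (g \<circ> f)"
      using continuous_map_compose[OF assms(3)[folded C_def] g_cont[of w]] unfolding g_def .
    hence "compactin euclideanreal ((g \<circ> f) ` C)"
      using image_compactin cpt tsC unfolding compact_space_def by metis
    hence "closed ((g \<circ> f) ` C)" using compact_imp_closed by simp
    moreover have "0 \<notin> (g \<circ> f) ` C"
    proof
      assume "0 \<in> (g \<circ> f) ` C"
      then obtain c where c: "c \<in> C" "g (f c) = 0" by auto
      show False
      proof (cases "f c")
        case None thus ?thesis using c unfolding g_def by simp
      next
        case (Some z)
        hence "z = w" using c unfolding g_def by (simp add: min_def split: if_splits)
        thus ?thesis using nw c Some by (metis image_eqI)
      qed
    qed
    ultimately have "open (- ((g \<circ> f) ` C))" "0 \<in> - ((g \<circ> f) ` C)" by auto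
    then obtain e where e0: "e > 0" "ball 0 e \<subseteq> - ((g \<circ> f) ` C)"
      using open_contains_ball by blast
    hence e: "e > 0" "ball 0 e \<inter> (g \<circ> f) ` C = {}" by auto
    obtain e2 where e2: "e2 > 0" "ball w e2 \<subseteq> Bm" using oB w open_contains_ball by blast
    show "\<exists>\<epsilon>>0. ball w \<epsilon> \<subseteq> Bm - U"
    proof (intro exI[of _ "min e e2"] conjI subsetI)
      show "min e e2 > 0" using e e2 by simp
      fix z assume z: "z \<in> ball w (min e e2)"
      hence zB: "z \<in> Bm" using e2 by auto
      have "z \<notin> U"
      proof
        assume "z \<in> U"
        then obtain c where c: "c \<in> D" "f c = Some z" unfolding U_def by auto
        have "dist z w < e" using z by (simp add: dist_commute)
        moreover have "g (f c) = min 1 (dist z w)" using c unfolding g_def by simp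
        ultimately have "g (f c) \<in> ball 0 e" using zero_le_dist[of z w] by (simp add: abs_if min_def)
        moreover have "g (f c) \<in> (g \<circ> f) ` C" using c DC by (metis comp_apply image_eqI subsetD)
        ultimately show False using e(2) by blast
      qed
      thus "z \<in> Bm - U" using zB by simp
    qed
  qed
  have "U = {} \<or> U = Bm"
  proof -
    have "openin (top_of_set Bm) U" using oU by (rule open_subset[rotated]) (auto simp: U_def)
    moreover have "closedin (top_of_set Bm) U"
      unfolding closedin_def using open_subset[OF _ oBU] by (auto simp: U_def)
    ultimately show ?thesis using cB unfolding connected_clopen by blast
  qed
  hence "Some ` Bm \<subseteq> f ` D \<or> f ` C \<subseteq> UNIV - Some ` Bm"
  proof
    assume "U = Bm" thus ?thesis unfolding U_def by auto
  next
    assume U0: "U = {}"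
    have "f ` C \<subseteq> UNIV - Some ` Bm"
    proof
      fix p assume "p \<in> f ` C"
      then obtain c where c: "c \<in> C" "p = f c" by auto
      have "p \<notin> Some ` Bm"
      proof
        assume "p \<in> Some ` Bm"
        then obtain z where z: "z \<in> Bm" "p = Some z" by auto
        show False
        proof (cases "c \<in> D")
          case True thus ?thesis using U0 z c unfolding U_def by (metis empty_Collect_eq image_eqI)
        next
          case False thus ?thesis using bd[OF z(1)] z c by (metis DiffI image_eqI)
        qed
      qed
      thus "p \<in> UNIV - Some ` Bm" by simp
    qed
    thus ?thesis ..
  qed
  thus ?thesis unfolding C_def m_def Bm_def Let_def by simp
qed

end
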